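(* Fix a time $t\ge0$, a multiplier $\lambda\ge0$, and a differentiable parametric policy $\pi_\theta(a\mid x)$ with $\pi_\theta(a\mid x)>0$ implying $\pi_0(a\mid x)>0$ (common support), and assume $L$ and $C$ are conditionally independent given $(x,a)$. Let $c(x,a)$ be a known cost function, $\hat\pi_0,\hat G,\hat S$ fixed (not depending on $\mathcal{D}$) models with $\hat G(t\mid x,a)>0$ and $\hat\pi_0(a\mid x)>0$ whenever $\pi_\theta(a\mid x)>0$, and $\hat w'(x,a)=\pi_\theta(a\mid x)/\hat\pi_0(a\mid x)$. Define $$\widehat{\nabla_\theta L}_{\mathrm{IPCW\text{-}IPS}}=\frac1n\sum_{i=1}^n \hat w'(x_i,a_i)\Big(\frac{\mathbb{I}\{T_i>t\}}{\hat G(t\mid x_i,a_i)}-\lambda c(x_i,a_i)\Big)\nabla_\theta\log\pi_\theta(a_i\mid x_i),$$ $$\widehat{\nabla_\theta L}_{\mathrm{IPCW\text{-}DR}}=\frac1n\sum_{i=1}^n\Big(\hat w'(x_i,a_i)\Big(\frac{\mathbb{I}\{T_i>t\}}{\hat G(t\mid x_i,a_i)}-\hat S(x_i,a_i,t)\Big)\nabla_\theta\log\pi_\theta(a_i\mid x_i)+\sum_{a\in\mathcal{A}}\pi_\theta(a\mid x_i)\big(\hat S(x_i,a,t)-\lambda c(x_i,a)\big)\nabla_\theta\log\pi_\theta(a\mid x_i)\Big).$$ Let $R_\lambda(x,a,t)=S(x,a,t)-\lambda c(x,a)$ and $g(\theta)=\mathbb{E}_{p(x)\pi_\theta(a\mid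 x)}[R_\lambda(x,a,t)\nabla_\theta\log\pi_\theta(a\mid x)]$ (the Lagrangian policy gradient $\nabla_\theta L(\pi_\theta,t,\lambda)$). Suppose $\hat G(t\mid x,a)=G(t\mid x,a)$ for all $x,a$. Then $\mathbb{E}_{\mathcal{D}}[\widehat{\nabla_\theta L}_{\mathrm{IPCW\text{-}IPS}}]=g(\theta)$ if $\hat\pi_0=\pi_0$, and $\mathbb{E}_{\mathcal{D}}[\widehat{\nabla_\theta L}_{\mathrm{IPCW\text{-}DR}}]=g(\theta)$ if either $\hat\pi_0=\pi_0$ or $\hat S(x,a,t)=S(x,a,t)$ for all $x,a$.
   Context: Let $\mathcal{X}$ be a context space and $\mathcal{A}$ a finite action set. A policy $\pi(a\mid x)$ is a conditional distribution over $\mathcal{A}$ given $x$. The logged data $\mathcal{D}=\{(x_i,a_i,T_i,r_i)\}_{i=1}^n$ consists of $n$ i.i.d. draws generated by $(x,a,L,C)\sim p(x)\pi_0(a\mid x)p(L,C\mid x,a)$ for a logging policy $\pi_0$, where $L\ge0$ is the latent survival time, $C\ge0$ the censoring time, and only $T=\min\{L,C\}$ and $r=\mathbb{I}\{L\le C\}$ are observed. Define $S(x,a,t)=P(L>t\mid x,a)$, $G(t\mid x,a)=P(C>t\mid x,a)$, $V(\pi,t)=\mathbb{E}_{p(x)\pi(a\mid x)}[S(x,a,t)]$, the expected cost $C(\pi)=\mathbb{E}_{p(x)\pi(a\mid x)}[c(x,a)]$, and for a budget $B$ the Lagrangian $L(\pi_\theta,t,\lambda)=V(\pi_\theta,t)-\lambda(C(\pi_\theta)-B)$.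 *)

theory Defs
  imports "HOL-Probability.Probability"
begin

text \<open>
  The conditional law of the
  latent pair (L, C) given (x, a) is a kernel K x a on real x real.
  An observed sample is (x, a, T, r) with T = min L C and r = (L <= C).
\<close>

type_synonym ('x, 'a) obs = "'x \<times> 'a \<times> real \<times> bool"

definition obs_space :: "'x measure \<Rightarrow> ('x, 'a) obs measure" where
  "obs_space px = px \<Otimes>\<^sub>M (count_space UNIV \<Otimes>\<^sub>M (borel \<Otimes>\<^sub>M count_space UNIV))"

definition sample_dist ::
  "'x measure \<Rightarrow> ('x \<Rightarrow> 'a pmf) \<Rightarrow> ('x \<Rightarrow> 'a \<Rightarrow> (real \<times> real) measure) \<Rightarrow> ('x, 'a) obs measure" where
  "sample_dist px pi0 K =
     px \<bind> (\<lambda>x. measure_pmf (pi0 x) \<bind>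
        (\<lambda>a. distr (K x a) (obs_space px) (\<lambda>(l, c). (x, a, min l c, l \<le> c))))"

definition data_dist ::
  "nat \<Rightarrow> 'x measure \<Rightarrow> ('x \<Rightarrow> 'a pmf) \<Rightarrow> ('x \<Rightarrow> 'a \<Rightarrow> (real \<times> real) measure) \<Rightarrow> (nat \<Rightarrow> ('x, 'a) obs) measure" where
  "data_dist n px pi0 K = PiM {..<n} (\<lambda>_. sample_dist px pi0 K)"

definition surv :: "('x \<Rightarrow> 'a \<Rightarrow> (real \<times> real) measure) \<Rightarrow> 'x \<Rightarrow> 'a \<Rightarrow> real \<Rightarrow> real" where
  "surv K x a t = measure (K x a) {z. fst z > t}"

definition cens_surv :: "('x \<Rightarrow> 'a \<Rightarrow> (real \<times> real) measure) \<Rightarrow> real \<Rightarrow> 'x \<Rightarrow> 'a \<Rightarrow> real" where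
  "cens_surv K t x a = measure (K x a) {z. snd z > t}"

definition score :: "('p::euclidean_space \<Rightarrow> 'x \<Rightarrow> 'a pmf) \<Rightarrow> 'p \<Rightarrow> 'x \<Rightarrow> 'a \<Rightarrow> 'p" where
  "score pol \<theta> x a =
     (SOME v. ((\<lambda>\<theta>'. ln (pmf (pol \<theta>' x) a)) has_derivative (\<lambda>h. v \<bullet> h)) (at \<theta>))"

definition ipcw_ips_term ::
  "('p::euclidean_space \<Rightarrow> 'x \<Rightarrow> 'a pmf) \<Rightarrow> 'p \<Rightarrow> ('x \<Rightarrow> 'a pmf) \<Rightarrow> (real \<Rightarrow> 'x \<Rightarrow> 'a \<Rightarrow> real)
     \<Rightarrow> ('x \<Rightarrow> 'a \<Rightarrow> real) \<Rightarrow> real \<Rightarrow> real \<Rightarrow> ('x, 'a) obs \<Rightarrow> 'p" where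
  "ipcw_ips_term pol \<theta> pihat0 Ghat c lam t d =
     (case d of (x, a, T, r) \<Rightarrow>
        (pmf (pol \<theta> x) a / pmf (pihat0 x) a) *\<^sub>R
        ((indicator {T. T > t} T / Ghat t x a - lam * c x a) *\<^sub>R score pol \<theta> x a))"

definition ipcw_dr_term ::
  "('p::euclidean_space \<Rightarrow> 'x \<Rightarrow> 'a::finite pmf) \<Rightarrow> 'p \<Rightarrow> ('x \<Rightarrow> 'a pmf) \<Rightarrow> (real \<Rightarrow> 'x \<Rightarrow> 'a \<Rightarrow> real)
     \<Rightarrow> ('x \<Rightarrow> 'a \<Rightarrow> real \<Rightarrow> real) \<Rightarrow> ('x \<Rightarrow> 'a \<Rightarrow> real) \<Rightarrow> real \<Rightarrow> real \<Rightarrow> ('x, 'a) obs \<Rightarrow> 'p" where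
  "ipcw_dr_term pol \<theta> pihat0 Ghat Shat c lam t d =
     (case d of (x, a, T, r) \<Rightarrow>
        (pmf (pol \<theta> x) a / pmf (pihat0 x) a) *\<^sub>R
          ((indicator {T. T > t} T / Ghat t x a - Shat x a t) *\<^sub>R score pol \<theta> x a)
        + (\<Sum>b\<in>UNIV. pmf (pol \<theta> x) b *\<^sub>R ((Shat x b t - lam * c x b) *\<^sub>R score pol \<theta> x b)))"

definition emp_avg :: "nat \<Rightarrow> (('x, 'a) obs \<Rightarrow> 'p::real_vector) \<Rightarrow> (nat \<Rightarrow> ('x, 'a) obs) \<Rightarrow> 'p" where
  "emp_avg n f D = (1 / real n) *\<^sub>R (\<Sum>i<n. f (D i))"

definition lagr_grad ::
  "'x measure \<Rightarrow> ('p::euclidean_space \<Rightarrow> 'x \<Rightarrow> 'a::finite pmf) \<Rightarrow> 'p \<Rightarrow> ('x \<Rightarrow> 'a \<Rightarrow> (real \<times> real) measure)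
     \<Rightarrow> ('x \<Rightarrow> 'a \<Rightarrow> real) \<Rightarrow> real \<Rightarrow> real \<Rightarrow> 'p" where
  "lagr_grad px pol \<theta> K c lam t =
     (\<integral>x. (\<Sum>a\<in>UNIV. pmf (pol \<theta> x) a *\<^sub>R ((surv K x a t - lam * c x a) *\<^sub>R score pol \<theta> x a)) \<partial>px)"

end

theory Submission imports Defs begin

lemma bind_integrable_parts:
  fixes f :: "_ \<Rightarrow> 'b::{banach, second_countable_topology}"
  assumes N: "N \<in> measurable M (subprob_algebra B)" and f: "integrable (M \<bind> N) f"
    and ne: "space M \<noteq> {}"
  shows "AE x in M. integrable (N x) f" and "integrable M (\<lambda>x. \<integral>y. f y \<partial>N x)"
proof -
  have sets: "sets (M \<bind> N) = sets B" by (rule sets_bind[OF sets_kernel[OF N] ne])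
  have fm: "f \<in> borel_measurable B"
    using borel_measurable_integrable[OF f] measurable_cong_sets[OF sets refl] by blast
  have fin: "(\<integral>\<^sup>+ y. norm (f y) \<partial>(M \<bind> N)) < \<infinity>"
    using f by (simp add: integrable_iff_bounded)
  have eq: "(\<integral>\<^sup>+ y. norm (f y) \<partial>(M \<bind> N)) = (\<integral>\<^sup>+ x. \<integral>\<^sup>+ y. norm (f y) \<partial>N x \<partial>M)"
    by (rule nn_integral_bind[OF _ N]) (use fm in measurable)
  have meas_in: "(\<lambda>x. \<integral>\<^sup>+ y. norm (f y) \<partial>N x) \<in> borel_measurable M"
    by (rule measurable_compose[OF N nn_integral_measurable_subprob_algebra]) (use fm in measurable)
  have "AE x in M. (\<integral>\<^sup>+ y. norm (f y) \<partial>N x) \<noteq> \<infinity>"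
    by (rule nn_integral_PInf_AE[OF meas_in]) (use fin eq in auto)
  moreover have "AE x in M. x \<in> space M" by (rule AE_space)
  ultimately show "AE x in M. integrable (N x) f"
  proof eventually_elim
    case (elim x)
    then have x: "x \<in> space M" and h: "(\<integral>\<^sup>+ y. norm (f y) \<partial>N x) \<noteq> \<infinity>" by auto
    have "f \<in> borel_measurable (N x)"
      using fm measurable_cong_sets[OF sets_kernel[OF N x] refl] by blast
    then show "integrable (N x) f"
      by (rule integrableI_bounded) (use h in \<open>simp add: less_top[symmetric]\<close>)
  qed
  show "integrable M (\<lambda>x. \<integral>y. f y \<partial>N x)"
  proof (rule integrableI_bounded)
    show "(\<lambda>x. \<integral>y. f y \<partial>N x) \<in> borel_measurable M"
      by (rule measurable_compose[OF N integral_measurable_subprob_algebra[OF fm]])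
    have "(\<integral>\<^sup>+ x. norm (\<integral>y. f y \<partial>N x) \<partial>M) \<le> (\<integral>\<^sup>+ x. \<integral>\<^sup>+ y. norm (f y) \<partial>N x \<partial>M)"
    proof (intro nn_integral_mono)
      fix x
      show "ennreal (norm (\<integral>y. f y \<partial>N x)) \<le> (\<integral>\<^sup>+ y. norm (f y) \<partial>N x)"
      proof (cases "integrable (N x) f")
        case True then show ?thesis by (rule integral_norm_bound_ennreal)
      next
        case False then show ?thesis by (simp add: not_integrable_integral_eq)
      qed
    qed
    then show "(\<integral>\<^sup>+ x. norm (\<integral>y. f y \<partial>N x) \<partial>M) < \<infinity>"
      using fin eq by auto
  qed
qed

lemma integral_bind_nonneg:
  fixes f :: "_ \<Rightarrow> real"
  assumes N: "N \<in> measurable M (subprob_algebra B)" and f: "integrable (M \<bind> N) f"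
    and ne: "space M \<noteq> {}" and nn: "\<And>y. 0 \<le> f y"
  shows "(\<integral>y. f y \<partial>(M \<bind> N)) = (\<integral>x. \<integral>y. f y \<partial>N x \<partial>M)"
proof -
  have sets: "sets (M \<bind> N) = sets B" by (rule sets_bind[OF sets_kernel[OF N] ne])
  have fm: "f \<in> borel_measurable B"
    using borel_measurable_integrable[OF f] measurable_cong_sets[OF sets refl] by blast
  note P = bind_integrable_parts[OF N f ne]
  have "(\<integral>y. f y \<partial>(M \<bind> N)) = enn2real (\<integral>\<^sup>+ y. ennreal (f y) \<partial>(M \<bind> N))"
    by (rule integral_eq_nn_integral) (use f nn in auto)
  also have "(\<integral>\<^sup>+ y. ennreal (f y) \<partial>(M \<bind> N)) = (\<integral>\<^sup>+ x. \<integral>\<^sup>+ y. ennreal (f y) \<partial>N x \<partial>M)"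
    by (rule nn_integral_bind[OF _ N]) (use fm in measurable)
  also have "\<dots> = (\<integral>\<^sup>+ x. ennreal (\<integral>y. f y \<partial>N x) \<partial>M)"
  proof (rule nn_integral_cong_AE)
    show "AE x in M. (\<integral>\<^sup>+ y. ennreal (f y) \<partial>N x) = ennreal (\<integral>y. f y \<partial>N x)"
      using P(1) by (rule eventually_mono) (rule nn_integral_eq_integral, assumption, simp add: nn)
  qed
  also have "enn2real \<dots> = (\<integral>x. \<integral>y. f y \<partial>N x \<partial>M)"
    by (rule integral_eq_nn_integral[symmetric]) (use P(2) nn in \<open>auto intro!: integral_nonneg\<close>)
  finally show ?thesis .
qed

lemma integral_bind_real:
  fixes f :: "_ \<Rightarrow> real"
  assumes N: "N \<in> measurable M (subprob_algebra B)" and f: "integrable (M \<bind> N) f"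
    and ne: "space M \<noteq> {}"
  shows "(\<integral>y. f y \<partial>(M \<bind> N)) = (\<integral>x. \<integral>y. f y \<partial>N x \<partial>M)"
proof -
  have sets: "sets (M \<bind> N) = sets B" by (rule sets_bind[OF sets_kernel[OF N] ne])
  have fm: "f \<in> borel_measurable B"
    using borel_measurable_integrable[OF f] measurable_cong_sets[OF sets refl] by blast
  define fp where "fp y = max (f y) 0" for y
  define fn where "fn y = max (- f y) 0" for y
  have fpi: "integrable (M \<bind> N) fp" unfolding fp_def by (intro integrable_max f integrable_zero)
  have fni: "integrable (M \<bind> N) fn" unfolding fn_def by (intro integrable_max integrable_minus f integrable_zero)
  have fpm: "fp \<in> borel_measurable B" unfolding fp_def by (intro borel_measurable_max fm borel_measurable_const)
  have fnm: "fn \<in> borel_measurable B" unfolding fn_def by (intro borel_measurable_max borel_measurable_uminus fm borel_measurable_const)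
  have fd: "f = (\<lambda>y. fp y - fn y)" unfolding fp_def fn_def by (auto simp: fun_eq_iff)
  have fpn: "\<And>y. 0 \<le> fp y" by (simp add: fp_def)
  have fnn: "\<And>y. 0 \<le> fn y" by (simp add: fn_def)
  note Pp = bind_integrable_parts[OF N fpi ne]
  note Pn = bind_integrable_parts[OF N fni ne]
  have "(\<integral>y. f y \<partial>(M \<bind> N)) = (\<integral>y. fp y \<partial>(M \<bind> N)) - (\<integral>y. fn y \<partial>(M \<bind> N))"
    by (subst fd, rule Bochner_Integration.integral_diff[OF fpi fni])
  also have "\<dots> = (\<integral>x. \<integral>y. fp y \<partial>N x \<partial>M) - (\<integral>x. \<integral>y. fn y \<partial>N x \<partial>M)"
    using integral_bind_nonneg[OF N fpi ne fpn] integral_bind_nonneg[OF N fni ne fnn]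
    by (simp only:)
  also have "\<dots> = (\<integral>x. (\<integral>y. fp y \<partial>N x) - (\<integral>y. fn y \<partial>N x) \<partial>M)"
    by (rule Bochner_Integration.integral_diff[OF Pp(2) Pn(2), symmetric])
  also have "\<dots> = (\<integral>x. \<integral>y. f y \<partial>N x \<partial>M)"
  proof (rule integral_cong_AE)
    show "(\<lambda>x. (\<integral>y. fp y \<partial>N x) - (\<integral>y. fn y \<partial>N x)) \<in> borel_measurable M"
      by (intro borel_measurable_diff measurable_compose[OF N integral_measurable_subprob_algebra[OF fpm]]
        measurable_compose[OF N integral_measurable_subprob_algebra[OF fnm]])
    show "(\<lambda>x. \<integral>y. f y \<partial>N x) \<in> borel_measurable M"
      by (rule measurable_compose[OF N integral_measurable_subprob_algebra[OF fm]])
    show "AE x in M. (\<integral>y. fp y \<partial>N x) - (\<integral>y. fn y \<partial>N x) = (\<integral>y. f y \<partial>N x)"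
      using Pp(1) Pn(1) by eventually_elim (simp add: fd Bochner_Integration.integral_diff)
  qed
  finally show ?thesis .
qed

lemma integral_bind_vec:
  fixes f :: "_ \<Rightarrow> 'b::euclidean_space"
  assumes N: "N \<in> measurable M (subprob_algebra B)" and f: "integrable (M \<bind> N) f"
    and ne: "space M \<noteq> {}"
  shows "(\<integral>y. f y \<partial>(M \<bind> N)) = (\<integral>x. \<integral>y. f y \<partial>N x \<partial>M)"
proof (rule euclidean_eqI)
  fix b :: 'b assume b: "b \<in> Basis"
  have sets: "sets (M \<bind> N) = sets B" by (rule sets_bind[OF sets_kernel[OF N] ne])
  have fm: "f \<in> borel_measurable B"
    using borel_measurable_integrable[OF f] measurable_cong_sets[OF sets refl] by blast
  note P = bind_integrable_parts[OF N f ne]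
  have fbi: "integrable (M \<bind> N) (\<lambda>y. f y \<bullet> b)" using f by (rule integrable_inner_left)
  have "(\<integral>y. f y \<partial>(M \<bind> N)) \<bullet> b = (\<integral>y. f y \<bullet> b \<partial>(M \<bind> N))"
    by (rule integral_inner_left[symmetric], rule f)
  also have "\<dots> = (\<integral>x. \<integral>y. f y \<bullet> b \<partial>N x \<partial>M)"
    by (rule integral_bind_real[OF N fbi ne])
  also have "\<dots> = (\<integral>x. (\<integral>y. f y \<partial>N x) \<bullet> b \<partial>M)"
  proof (rule integral_cong_AE)
    have fbm: "(\<lambda>y. f y \<bullet> b) \<in> borel_measurable B" by (intro borel_measurable_inner fm borel_measurable_const)
    show "(\<lambda>x. \<integral>y. f y \<bullet> b \<partial>N x) \<in> borel_measurable M"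
      by (rule measurable_compose[OF N integral_measurable_subprob_algebra[OF fbm]])
    show "(\<lambda>x. (\<integral>y. f y \<partial>N x) \<bullet> b) \<in> borel_measurable M"
      by (intro borel_measurable_inner borel_measurable_const measurable_compose[OF N integral_measurable_subprob_algebra[OF fm]])
    show "AE x in M. (\<integral>y. f y \<bullet> b \<partial>N x) = (\<integral>y. f y \<partial>N x) \<bullet> b"
      using P(1) by eventually_elim (rule integral_inner_left, assumption)
  qed
  also have "\<dots> = (\<integral>x. \<integral>y. f y \<partial>N x \<partial>M) \<bullet> b"
    by (rule integral_inner_left, rule P(2))
  finally show "(\<integral>y. f y \<partial>(M \<bind> N)) \<bullet> b = (\<integral>x. \<integral>y. f y \<partial>N x \<partial>M) \<bullet> b" .
qed

lemma obs_map_meas: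
  assumes x: "x \<in> space px"
  shows "(\<lambda>(l, c). (x, a, min l c, l \<le> c)) \<in> measurable (lborel \<Otimes>\<^sub>M lborel) (obs_space px)"
  unfolding obs_space_def using x by measurable

lemma kernel2_meas:
  fixes K :: "'x \<Rightarrow> 'a::finite \<Rightarrow> (real \<times> real) measure"
  assumes K_meas: "\<And>a. (\<lambda>x. K x a) \<in> measurable px (subprob_algebra (lborel \<Otimes>\<^sub>M lborel))"
  shows "(\<lambda>y. distr (K (fst y) (snd y)) (obs_space px) (\<lambda>(l, c). (fst y, snd y, min l c, l \<le> c)))
     \<in> measurable (px \<Otimes>\<^sub>M count_space UNIV) (subprob_algebra (obs_space px))"
proof -
  have g: "(\<lambda>y. K (fst y) (snd y)) \<in> measurable (px \<Otimes>\<^sub>M count_space UNIV) (subprob_algebra (lborel \<Otimes>\<^sub>M lborel))"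
  proof (rule measurable_compose_countable'[where f="\<lambda>a y. K (fst y) a" and g=snd and I=UNIV])
    fix a :: 'a
    show "(\<lambda>y. K (fst y) a) \<in> measurable (px \<Otimes>\<^sub>M count_space UNIV) (subprob_algebra (lborel \<Otimes>\<^sub>M lborel))"
      by (rule measurable_compose[OF measurable_fst K_meas])
  qed auto
  have f: "(\<lambda>(y, z). (\<lambda>(l, c). (fst y, snd y, min l c, l \<le> c)) z)
      \<in> measurable ((px \<Otimes>\<^sub>M count_space UNIV) \<Otimes>\<^sub>M (lborel \<Otimes>\<^sub>M lborel)) (obs_space px)"
    unfolding obs_space_def by measurable
  show ?thesis
    using measurable_distr2[OF f g] by simp
qed

lemma pmf_kernel_meas:
  fixes pi0 :: "'x \<Rightarrow> 'a::finite pmf"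
  assumes pi0_meas: "\<And>a. (\<lambda>x. pmf (pi0 x) a) \<in> borel_measurable px"
  shows "(\<lambda>x. measure_pmf (pi0 x)) \<in> measurable px (subprob_algebra (count_space UNIV))"
proof (rule measurable_subprob_algebra)
  fix x show "subprob_space (measure_pmf (pi0 x))" by (rule subprob_space_measure_pmf)
  show "sets (measure_pmf (pi0 x)) = sets (count_space UNIV)" by simp
next
  fix A :: "'a set"
  have "(\<lambda>x. ennreal (\<Sum>a\<in>A. pmf (pi0 x) a)) \<in> borel_measurable px"
    using pi0_meas by measurable
  then show "(\<lambda>x. emeasure (measure_pmf (pi0 x)) A) \<in> borel_measurable px"
    by (simp add: emeasure_measure_pmf_finite)
qed

lemma kernel1_meas:
  fixes K :: "'x \<Rightarrow> 'a::finite \<Rightarrow> (real \<times> real) measure" and pi0 :: "'x \<Rightarrow> 'a pmf"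
  assumes K_meas: "\<And>a. (\<lambda>x. K x a) \<in> measurable px (subprob_algebra (lborel \<Otimes>\<^sub>M lborel))"
    and pi0_meas: "\<And>a. (\<lambda>x. pmf (pi0 x) a) \<in> borel_measurable px"
  shows "(\<lambda>x. measure_pmf (pi0 x) \<bind> (\<lambda>a. distr (K x a) (obs_space px) (\<lambda>(l, c). (x, a, min l c, l \<le> c))))
     \<in> measurable px (subprob_algebra (obs_space px))"
  using kernel2_meas[OF K_meas] by (rule measurable_bind[OF pmf_kernel_meas[OF pi0_meas]])

lemma K_level:
  fixes K :: "'x \<Rightarrow> 'a \<Rightarrow> (real \<times> real) measure"
  assumes Kp: "prob_space (K x a)" and Ks: "sets (K x a) = sets (lborel \<Otimes>\<^sub>M lborel)"
    and indep: "K x a = distr (K x a) lborel fst \<Otimes>\<^sub>M distr (K x a) lborel snd"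
  shows "measure (K x a) ({t<..} \<times> {t<..}) = surv K x a t * cens_surv K t x a"
proof -
  define D1 where "D1 = distr (K x a) lborel fst"
  define D2 where "D2 = distr (K x a) lborel snd"
  have e: "K x a = D1 \<Otimes>\<^sub>M D2" using indep by (simp add: D1_def D2_def)
  have fm: "fst \<in> measurable (K x a) lborel"
    using measurable_cong_sets[OF Ks refl] measurable_fst by blast
  have sm: "snd \<in> measurable (K x a) lborel"
    using measurable_cong_sets[OF Ks refl] measurable_snd by blast
  have P1: "prob_space D1" unfolding D1_def by (rule prob_space.prob_space_distr[OF Kp fm])
  have P2: "prob_space D2" unfolding D2_def by (rule prob_space.prob_space_distr[OF Kp sm])
  interpret S2: sigma_finite_measure D2 using prob_space_imp_sigma_finite[OF P2] .
  interpret PP1: prob_space D1 by (rule P1)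
  interpret PP2: prob_space D2 by (rule P2)
  have sD1: "sets D1 = sets borel" by (simp add: D1_def)
  have sD2: "sets D2 = sets borel" by (simp add: D2_def)
  have spD2: "space D2 = UNIV" by (simp add: D2_def)
  have spD1: "space D1 = UNIV" by (simp add: D1_def)
  have prod: "measure (K x a) (A \<times> B) = measure D1 A * measure D2 B"
    if A: "A \<in> sets borel" and B: "B \<in> sets borel" for A B
  proof -
    have "emeasure (D1 \<Otimes>\<^sub>M D2) (A \<times> B) = emeasure D1 A * emeasure D2 B"
      by (rule S2.emeasure_pair_measure_Times) (use A B sD1 sD2 in auto)
    also have "\<dots> = ennreal (measure D1 A * measure D2 B)"
      using PP1.emeasure_eq_measure PP2.emeasure_eq_measure
      by (simp add: ennreal_mult)
    finally show ?thesis unfolding e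
      by (intro measure_eq_emeasure_eq_ennreal) auto
  qed
  have one1: "measure D1 UNIV = 1" using prob_space.prob_space[OF P1] spD1 by simp
  have one2: "measure D2 UNIV = 1" using prob_space.prob_space[OF P2] spD2 by simp
  have "surv K x a t = measure (K x a) ({t<..} \<times> UNIV)"
    unfolding surv_def by (rule arg_cong[where f="measure (K x a)"]) auto
  also have "\<dots> = measure D1 {t<..}" using prod[of "{t<..}" UNIV] one2 by simp
  finally have S: "surv K x a t = measure D1 {t<..}" .
  have "cens_surv K t x a = measure (K x a) (UNIV \<times> {t<..})"
    unfolding cens_surv_def by (rule arg_cong[where f="measure (K x a)"]) auto
  also have "\<dots> = measure D2 {t<..}" using prod[of UNIV "{t<..}"] one1 by simp
  finally have G: "cens_surv K t x a = measure D2 {t<..}" .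
  show ?thesis using prod[of "{t<..}" "{t<..}"] S G by simp
qed

lemma inner_integral:
  fixes K :: "'x \<Rightarrow> 'a::finite \<Rightarrow> (real \<times> real) measure" and pi0 :: "'x \<Rightarrow> 'a pmf"
    and f :: "('x, 'a) obs \<Rightarrow> 'p::euclidean_space" and u v :: "'a \<Rightarrow> 'p"
  assumes x: "x \<in> space px"
    and K_meas: "\<And>a. (\<lambda>x. K x a) \<in> measurable px (subprob_algebra (lborel \<Otimes>\<^sub>M lborel))"
    and K_prob: "\<And>a. prob_space (K x a)"
    and indep: "\<And>a. K x a = distr (K x a) lborel fst \<Otimes>\<^sub>M distr (K x a) lborel snd"
    and fm: "f \<in> borel_measurable (obs_space px)"
    and fform: "\<And>a T r. f (x, a, T, r) = u a + indicator {T. t < T} T *\<^sub>R v a"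
  shows "integrable (measure_pmf (pi0 x) \<bind> (\<lambda>a. distr (K x a) (obs_space px) (\<lambda>(l, c). (x, a, min l c, l \<le> c)))) f"
    and "(\<integral>y. f y \<partial>(measure_pmf (pi0 x) \<bind> (\<lambda>a. distr (K x a) (obs_space px) (\<lambda>(l, c). (x, a, min l c, l \<le> c)))))
          = (\<Sum>a\<in>UNIV. pmf (pi0 x) a *\<^sub>R (u a + (surv K x a t * cens_surv K t x a) *\<^sub>R v a))"
proof -
  define g where "g (a::'a) = (\<lambda>(l::real, c::real). (x, a, min l c, l \<le> c))" for a
  define N where "N a = distr (K x a) (obs_space px) (g a)" for a
  have Ks: "sets (K x a) = sets (lborel \<Otimes>\<^sub>M lborel)" for a
    by (rule sets_kernel[OF K_meas x])
  have spK: "space (K x a) = UNIV" for a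
    using sets_eq_imp_space_eq[OF Ks[of a]] by (simp add: space_pair_measure)
  have gm: "g a \<in> measurable (K x a) (obs_space px)" for a
    using measurable_cong_sets[OF Ks refl] obs_map_meas[OF x, of a] unfolding g_def by blast
  have Nsp: "N a \<in> space (subprob_algebra (obs_space px))" for a
    unfolding N_def space_subprob_algebra
    by (auto intro!: prob_space_imp_subprob_space prob_space.prob_space_distr[OF K_prob gm])
  have Nm: "N \<in> measurable (measure_pmf (pi0 x)) (subprob_algebra (obs_space px))"
    using Nsp by simp
  define A where "A = {t<..} \<times> ({t<..} :: real set)"
  have A_sets: "A \<in> sets (K x a)" for a
    unfolding A_def Ks by (intro pair_measureI) auto
  have hform: "(\<lambda>z. f (g a z)) = (\<lambda>z. u a + indicator A z *\<^sub>R v a)" for a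
    by (auto simp: fun_eq_iff g_def fform A_def indicator_def split: prod.splits)
  have hint: "integrable (K x a) (\<lambda>z. u a + indicator A z *\<^sub>R v a)" for a
  proof -
    interpret Kp: prob_space "K x a" by (rule K_prob)
    have "integrable (K x a) (indicator A :: _ \<Rightarrow> real)"
      using A_sets[of a] by (intro integrable_real_indicator) (auto simp: Kp.emeasure_eq_measure)
    then show ?thesis by (intro Bochner_Integration.integrable_add Kp.integrable_const integrable_scaleR_left)
  qed
  have Nint: "integrable (N a) f" for a
    unfolding N_def integrable_distr_eq[OF gm fm] hform by (rule hint)
  have Nval: "(\<integral>y. f y \<partial>N a) = u a + (surv K x a t * cens_surv K t x a) *\<^sub>R v a" for a
  proof -
    interpret Kp: prob_space "K x a" by (rule K_prob)
    have "(\<integral>y. f y \<partial>N a) = (\<integral>z. u a + indicator A z *\<^sub>R v a \<partial>K x a)"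
      unfolding N_def integral_distr[OF gm fm] hform ..
    also have "\<dots> = u a + measure (K x a) A *\<^sub>R v a"
    proof -
      have ii: "integrable (K x a) (indicator A :: _ \<Rightarrow> real)"
        using A_sets[of a] by (intro integrable_real_indicator) (auto simp: Kp.emeasure_eq_measure)
      have "(\<integral>z. u a + indicator A z *\<^sub>R v a \<partial>K x a) = (\<integral>z. u a \<partial>K x a) + (\<integral>z. indicator A z *\<^sub>R v a \<partial>K x a)"
        by (rule Bochner_Integration.integral_add) (use ii in auto)
      also have "(\<integral>z. u a \<partial>K x a) = u a" using Kp.prob_space by simp
      also have "(\<integral>z. indicator A z *\<^sub>R v a \<partial>K x a) = measure (K x a) A *\<^sub>R v a"
        using ii spK[of a] by simp
      finally show ?thesis .
    qed
    also have "measure (K x a) A = surv K x a t * cens_surv K t x a"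
      unfolding A_def by (rule K_level[of K x a, OF K_prob Ks indep])
    finally show ?thesis .
  qed
  have ne: "space (measure_pmf (pi0 x)) \<noteq> {}" by simp
  have Neq: "(\<lambda>a. distr (K x a) (obs_space px) (\<lambda>(l, c). (x, a, min l c, l \<le> c))) = N"
    unfolding N_def g_def by (rule refl)
  have sets_b: "sets (measure_pmf (pi0 x) \<bind> N) = sets (obs_space px)"
    by (rule sets_bind[OF sets_kernel[OF Nm] ne])
  have bint: "integrable (measure_pmf (pi0 x) \<bind> N) f"
  proof (rule integrableI_bounded)
    show "f \<in> borel_measurable (measure_pmf (pi0 x) \<bind> N)"
      using fm measurable_cong_sets[OF sets_b refl] by blast
    have "(\<integral>\<^sup>+ y. norm (f y) \<partial>(measure_pmf (pi0 x) \<bind> N))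
        = (\<integral>\<^sup>+ a. \<integral>\<^sup>+ y. norm (f y) \<partial>N a \<partial>measure_pmf (pi0 x))"
      by (rule nn_integral_bind[OF _ Nm]) (use fm in measurable)
    also have "\<dots> = (\<Sum>a\<in>set_pmf (pi0 x). (\<integral>\<^sup>+ y. norm (f y) \<partial>N a) * pmf (pi0 x) a)"
      by (rule nn_integral_measure_pmf_finite) auto
    also have "\<dots> < \<infinity>"
      using Nint by (simp add: integrable_iff_bounded ennreal_mult_less_top)
    finally show "(\<integral>\<^sup>+ y. norm (f y) \<partial>(measure_pmf (pi0 x) \<bind> N)) < \<infinity>" .
  qed
  then show "integrable (measure_pmf (pi0 x) \<bind> (\<lambda>a. distr (K x a) (obs_space px) (\<lambda>(l, c). (x, a, min l c, l \<le> c)))) f"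
    unfolding Neq .
  have "(\<integral>y. f y \<partial>(measure_pmf (pi0 x) \<bind> N)) = (\<integral>a. (\<integral>y. f y \<partial>N a) \<partial>measure_pmf (pi0 x))"
    by (rule integral_bind_vec[OF Nm bint ne])
  also have "\<dots> = (\<Sum>a\<in>UNIV. pmf (pi0 x) a *\<^sub>R (\<integral>y. f y \<partial>N a))"
    by (rule integral_measure_pmf) auto
  finally show "(\<integral>y. f y \<partial>(measure_pmf (pi0 x) \<bind> (\<lambda>a. distr (K x a) (obs_space px) (\<lambda>(l, c). (x, a, min l c, l \<le> c)))))
          = (\<Sum>a\<in>UNIV. pmf (pi0 x) a *\<^sub>R (u a + (surv K x a t * cens_surv K t x a) *\<^sub>R v a))"
    unfolding Neq by (simp add: Nval)
qed

lemma sample_dist_facts: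
  fixes K :: "'x \<Rightarrow> 'a::finite \<Rightarrow> (real \<times> real) measure" and pi0 :: "'x \<Rightarrow> 'a pmf"
  assumes px: "prob_space px"
    and pi0_meas: "\<And>a. (\<lambda>x. pmf (pi0 x) a) \<in> borel_measurable px"
    and K_meas: "\<And>a. (\<lambda>x. K x a) \<in> measurable px (subprob_algebra (lborel \<Otimes>\<^sub>M lborel))"
    and K_prob: "\<And>x a. x \<in> space px \<Longrightarrow> prob_space (K x a)"
  shows "prob_space (sample_dist px pi0 K)" and "sets (sample_dist px pi0 K) = sets (obs_space px)"
proof -
  note N1m = kernel1_meas[OF K_meas pi0_meas]
  have ne: "space px \<noteq> {}" using prob_space.not_empty[OF px] .
  show "sets (sample_dist px pi0 K) = sets (obs_space px)"
    unfolding sample_dist_def by (rule sets_bind[OF sets_kernel[OF N1m] ne])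
  have "prob_space (measure_pmf (pi0 x) \<bind> (\<lambda>a. distr (K x a) (obs_space px) (\<lambda>(l, c). (x, a, min l c, l \<le> c))))"
    if x: "x \<in> space px" for x
  proof -
    have Ks: "sets (K x a) = sets (lborel \<Otimes>\<^sub>M lborel)" for a
      by (rule sets_kernel[OF K_meas x])
    have gm: "(\<lambda>(l, c). (x, a, min l c, l \<le> c)) \<in> measurable (K x a) (obs_space px)" for a
      using measurable_cong_sets[OF Ks refl] obs_map_meas[OF x, of a] by blast
    have P: "prob_space (distr (K x a) (obs_space px) (\<lambda>(l, c). (x, a, min l c, l \<le> c)))" for a
      by (rule prob_space.prob_space_distr[OF K_prob[OF x] gm])
    have Nm: "(\<lambda>a. distr (K x a) (obs_space px) (\<lambda>(l, c). (x, a, min l c, l \<le> c)))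
        \<in> measurable (measure_pmf (pi0 x)) (subprob_algebra (obs_space px))"
      using P by (auto simp: space_subprob_algebra intro!: prob_space_imp_subprob_space)
    show ?thesis
      by (rule prob_space.prob_space_bind[OF measure_pmf.prob_space_axioms _ Nm]) (use P in auto)
  qed
  then show "prob_space (sample_dist px pi0 K)"
    unfolding sample_dist_def by (intro prob_space.prob_space_bind[OF px _ N1m] AE_I2)
qed

lemma sample_integral:
  fixes K :: "'x \<Rightarrow> 'a::finite \<Rightarrow> (real \<times> real) measure" and pi0 :: "'x \<Rightarrow> 'a pmf"
    and f :: "('x, 'a) obs \<Rightarrow> 'p::euclidean_space" and u v :: "'x \<Rightarrow> 'a \<Rightarrow> 'p"
  assumes px: "prob_space px"
    and pi0_meas: "\<And>a. (\<lambda>x. pmf (pi0 x) a) \<in> borel_measurable px"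
    and K_meas: "\<And>a. (\<lambda>x. K x a) \<in> measurable px (subprob_algebra (lborel \<Otimes>\<^sub>M lborel))"
    and K_prob: "\<And>x a. x \<in> space px \<Longrightarrow> prob_space (K x a)"
    and indep: "\<And>x a. x \<in> space px \<Longrightarrow> K x a = distr (K x a) lborel fst \<Otimes>\<^sub>M distr (K x a) lborel snd"
    and fi: "integrable (sample_dist px pi0 K) f"
    and fform: "\<And>x a T r. x \<in> space px \<Longrightarrow> f (x, a, T, r) = u x a + indicator {T. t < T} T *\<^sub>R v x a"
  shows "(\<integral>y. f y \<partial>sample_dist px pi0 K)
     = (\<integral>x. (\<Sum>a\<in>UNIV. pmf (pi0 x) a *\<^sub>R (u x a + (surv K x a t * cens_surv K t x a) *\<^sub>R v x a)) \<partial>px)"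
proof -
  note N1m = kernel1_meas[OF K_meas pi0_meas]
  have ne: "space px \<noteq> {}" using prob_space.not_empty[OF px] .
  have fm: "f \<in> borel_measurable (obs_space px)"
  proof -
    have ss: "sets (sample_dist px pi0 K) = sets (obs_space px)"
      by (rule sample_dist_facts(2)[OF px pi0_meas K_meas K_prob])
    show ?thesis using borel_measurable_integrable[OF fi] unfolding measurable_cong_sets[OF ss refl] .
  qed
  have "(\<integral>y. f y \<partial>sample_dist px pi0 K) = (\<integral>x. (\<integral>y. f y \<partial>(measure_pmf (pi0 x) \<bind>
          (\<lambda>a. distr (K x a) (obs_space px) (\<lambda>(l, c). (x, a, min l c, l \<le> c))))) \<partial>px)"
    using fi unfolding sample_dist_def by (rule integral_bind_vec[OF N1m _ ne])
  also have "\<dots> = (\<integral>x. (\<Sum>a\<in>UNIV. pmf (pi0 x) a *\<^sub>R (u x a + (surv K x a t * cens_surv K t x a) *\<^sub>R v x a)) \<partial>px)"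
  proof (rule Bochner_Integration.integral_cong[OF refl])
    fix x assume x: "x \<in> space px"
    show "(\<integral>y. f y \<partial>(measure_pmf (pi0 x) \<bind>
          (\<lambda>a. distr (K x a) (obs_space px) (\<lambda>(l, c). (x, a, min l c, l \<le> c)))))
        = (\<Sum>a\<in>UNIV. pmf (pi0 x) a *\<^sub>R (u x a + (surv K x a t * cens_surv K t x a) *\<^sub>R v x a))"
      by (rule inner_integral(2)[OF x K_meas K_prob[OF x] indep[OF x] fm fform[OF x]])
  qed
  finally show ?thesis .
qed

lemma data_integral:
  fixes f :: "_ \<Rightarrow> 'p::euclidean_space"
  assumes P: "prob_space M" and fi: "integrable M f" and n: "n > 0"
  shows "(\<integral>D. emp_avg n f D \<partial>PiM {..<n} (\<lambda>_. M)) = (\<integral>y. f y \<partial>M)"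
proof -
  have fm: "f \<in> borel_measurable M" using fi by auto
  have mi: "(\<lambda>D. D i) \<in> measurable (PiM {..<n} (\<lambda>_. M)) M" if "i < n" for i
    using measurable_component_singleton[of i "{..<n}" "\<lambda>_. M"] that by simp
  have comp: "distr (PiM {..<n} (\<lambda>_. M)) M (\<lambda>D. D i) = M" if "i < n" for i
    using distr_PiM_component[of "{..<n}" "\<lambda>_. M" i] P that by simp
  have ii: "integrable (PiM {..<n} (\<lambda>_. M)) (\<lambda>D. f (D i))" if "i < n" for i
    using integrable_distr_eq[OF mi[OF that] fm] comp[OF that] fi by simp
  have vi: "(\<integral>D. f (D i) \<partial>PiM {..<n} (\<lambda>_. M)) = (\<integral>y. f y \<partial>M)" if "i < n" for i
    using integral_distr[OF mi[OF that] fm] comp[OF that] by simp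
  have "(\<integral>D. emp_avg n f D \<partial>PiM {..<n} (\<lambda>_. M))
      = (1 / real n) *\<^sub>R (\<integral>D. (\<Sum>i<n. f (D i)) \<partial>PiM {..<n} (\<lambda>_. M))"
    unfolding emp_avg_def by (rule integral_scaleR_right)
  also have "(\<integral>D. (\<Sum>i<n. f (D i)) \<partial>PiM {..<n} (\<lambda>_. M)) = (\<Sum>i<n. (\<integral>D. f (D i) \<partial>PiM {..<n} (\<lambda>_. M)))"
    by (rule Bochner_Integration.integral_sum) (use ii in auto)
  also have "\<dots> = (\<Sum>i<n. (\<integral>y. f y \<partial>M))"
    by (rule sum.cong) (use vi in auto)
  finally show ?thesis using n by (simp add: sum_constant_scaleR scaleR_scaleR)
qed

lemma coef1:
  fixes p q G S l :: real
  assumes "p \<noteq> 0 \<Longrightarrow> q > 0" "p \<noteq> 0 \<Longrightarrow> G > 0"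
  shows "q * ((p / q) * (- l) + S * G * ((p / q) / G)) = p * (S - l)"
proof (cases "p = 0")
  case True then show ?thesis by simp
next
  case False then have "q > 0" "G > 0" using assms by auto
  then show ?thesis by (simp add: field_simps)
qed

lemma coef2:
  fixes p q G S :: real
  assumes "p \<noteq> 0 \<Longrightarrow> G > 0"
  shows "(p / q) * (- S) + S * G * ((p / q) / G) = 0"
proof (cases "p = 0")
  case True then show ?thesis by simp
next
  case False then have "G > 0" using assms by auto
  then show ?thesis by (simp add: field_simps)
qed

theorem mainTheorem5:
  fixes px :: "'x measure"
    and pi0 pihat0 :: "'x \<Rightarrow> 'a::finite pmf"
    and pol :: "'p::euclidean_space \<Rightarrow> 'x \<Rightarrow> 'a pmf"
    and \<theta> :: 'p
    and K :: "'x \<Rightarrow> 'a \<Rightarrow> (real \<times> real) measure"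
    and c :: "'x \<Rightarrow> 'a \<Rightarrow> real"
    and Ghat :: "real \<Rightarrow> 'x \<Rightarrow> 'a \<Rightarrow> real"
    and Shat :: "'x \<Rightarrow> 'a \<Rightarrow> real \<Rightarrow> real"
    and t lam :: real and n :: nat
  assumes px: "prob_space px"
    and pi0_meas: "\<And>a. (\<lambda>x. pmf (pi0 x) a) \<in> borel_measurable px"
    and K_meas: "\<And>a. (\<lambda>x. K x a) \<in> measurable px (subprob_algebra (lborel \<Otimes>\<^sub>M lborel))"
    and K_prob: "\<And>x a. x \<in> space px \<Longrightarrow> prob_space (K x a)"
    and K_nonneg: "\<And>x a. x \<in> space px \<Longrightarrow> AE z in K x a. 0 \<le> fst z \<and> 0 \<le> snd z"
    and cond_indep: "\<And>x a. x \<in> space px \<Longrightarrow>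
          K x a = distr (K x a) lborel fst \<Otimes>\<^sub>M distr (K x a) lborel snd"
    and pol_diff: "\<And>\<theta>' x a. (\<lambda>\<phi>. pmf (pol \<phi> x) a) differentiable (at \<theta>')"
    and common_support: "\<And>x a. pmf (pol \<theta> x) a > 0 \<Longrightarrow> pmf (pi0 x) a > 0"
    and Ghat_pos: "\<And>x a. pmf (pol \<theta> x) a > 0 \<Longrightarrow> Ghat t x a > 0"
    and pihat0_pos: "\<And>x a. pmf (pol \<theta> x) a > 0 \<Longrightarrow> pmf (pihat0 x) a > 0"
    and t: "t \<ge> 0" and lam: "lam \<ge> 0" and n: "n > 0"
    and int_ips: "integrable (sample_dist px pi0 K) (ipcw_ips_term pol \<theta> pihat0 Ghat c lam t)"
    and int_dr: "integrable (sample_dist px pi0 K) (ipcw_dr_term pol \<theta> pihat0 Ghat Shat c lam t)"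
    and Ghat_eq: "\<And>x a. Ghat t x a = cens_surv K t x a"
  shows "(pihat0 = pi0 \<longrightarrow>
            (\<integral>D. emp_avg n (ipcw_ips_term pol \<theta> pihat0 Ghat c lam t) D \<partial>data_dist n px pi0 K)
              = lagr_grad px pol \<theta> K c lam t)
       \<and> ((pihat0 = pi0 \<or> (\<forall>x a. Shat x a t = surv K x a t)) \<longrightarrow>
            (\<integral>D. emp_avg n (ipcw_dr_term pol \<theta> pihat0 Ghat Shat c lam t) D \<partial>data_dist n px pi0 K)
              = lagr_grad px pol \<theta> K c lam t)"
proof -
  let ?M = "sample_dist px pi0 K"
  have P: "prob_space ?M" by (rule sample_dist_facts(1)[OF px pi0_meas K_meas K_prob])
  have DD: "data_dist n px pi0 K = PiM {..<n} (\<lambda>_. ?M)" unfolding data_dist_def ..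
  define S where "S x a = surv K x a t" for x a
  define G where "G x a = cens_surv K t x a" for x a
  define s where "s x a = score pol \<theta> x a" for x a
  define w where "w x a = pmf (pol \<theta> x) a / pmf (pihat0 x) a" for x a
  define Sig where "Sig x = (\<Sum>b\<in>UNIV. pmf (pol \<theta> x) b *\<^sub>R ((Shat x b t - lam * c x b) *\<^sub>R score pol \<theta> x b))" for x
  have lg: "lagr_grad px pol \<theta> K c lam t = (\<integral>x. (\<Sum>a\<in>UNIV. pmf (pol \<theta> x) a *\<^sub>R ((S x a - lam * c x a) *\<^sub>R s x a)) \<partial>px)"
    unfolding lagr_grad_def S_def s_def ..
  have Gpos: "pmf (pol \<theta> x) a \<noteq> 0 \<Longrightarrow> G x a > 0" for x a
    using Ghat_pos[of x a] Ghat_eq[of x a] pmf_nonneg[of "pol \<theta> x" a] unfolding G_def by linarith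
  have sum1: "(\<Sum>a\<in>UNIV. pmf (pi0 x) a) = 1" for x
    by (rule sum_pmf_eq_1) auto
  show ?thesis
  proof (intro conjI impI)
    assume eq: "pihat0 = pi0"
    have ff: "ipcw_ips_term pol \<theta> pihat0 Ghat c lam t (x, a, T, r)
        = (w x a * (- (lam * c x a))) *\<^sub>R s x a + indicator {T. t < T} T *\<^sub>R ((w x a / G x a) *\<^sub>R s x a)" for x a T r
      unfolding ipcw_ips_term_def w_def s_def G_def Ghat_eq
      by (simp add: algebra_simps scaleR_scaleR)
    have "(\<integral>y. ipcw_ips_term pol \<theta> pihat0 Ghat c lam t y \<partial>?M)
       = (\<integral>x. (\<Sum>a\<in>UNIV. pmf (pi0 x) a *\<^sub>R ((w x a * (- (lam * c x a))) *\<^sub>R s x a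
            + (surv K x a t * cens_surv K t x a) *\<^sub>R ((w x a / G x a) *\<^sub>R s x a))) \<partial>px)"
      by (rule sample_integral[OF px pi0_meas K_meas K_prob cond_indep int_ips ff])
    also have "\<dots> = lagr_grad px pol \<theta> K c lam t"
      unfolding lg
    proof (intro Bochner_Integration.integral_cong refl sum.cong)
      fix x a
      have "pmf (pi0 x) a *\<^sub>R ((w x a * (- (lam * c x a))) *\<^sub>R s x a
            + (surv K x a t * cens_surv K t x a) *\<^sub>R ((w x a / G x a) *\<^sub>R s x a))
          = (pmf (pi0 x) a * (w x a * (- (lam * c x a)) + S x a * G x a * (w x a / G x a))) *\<^sub>R s x a"
        unfolding S_def G_def by (simp add: scaleR_scaleR algebra_simps)
      also have "pmf (pi0 x) a * (w x a * (- (lam * c x a)) + S x a * G x a * (w x a / G x a))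
          = pmf (pol \<theta> x) a * (S x a - lam * c x a)"
        unfolding w_def eq
        by (rule coef1) (use common_support[of x a] pmf_nonneg[of "pol \<theta> x" a] Gpos[of x a] in auto)
      finally show "pmf (pi0 x) a *\<^sub>R ((w x a * (- (lam * c x a))) *\<^sub>R s x a
            + (surv K x a t * cens_surv K t x a) *\<^sub>R ((w x a / G x a) *\<^sub>R s x a))
          = pmf (pol \<theta> x) a *\<^sub>R ((S x a - lam * c x a) *\<^sub>R s x a)"
        by (simp add: scaleR_scaleR)
    qed
    finally show "(\<integral>D. emp_avg n (ipcw_ips_term pol \<theta> pihat0 Ghat c lam t) D \<partial>data_dist n px pi0 K)
              = lagr_grad px pol \<theta> K c lam t"
      unfolding DD using data_integral[OF P int_ips n] by simp
  next
    assume hyp: "pihat0 = pi0 \<or> (\<forall>x a. Shat x a t = surv K x a t)"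
    have ff: "ipcw_dr_term pol \<theta> pihat0 Ghat Shat c lam t (x, a, T, r)
        = ((w x a * (- Shat x a t)) *\<^sub>R s x a + Sig x) + indicator {T. t < T} T *\<^sub>R ((w x a / G x a) *\<^sub>R s x a)" for x a T r
      unfolding ipcw_dr_term_def w_def s_def G_def Ghat_eq Sig_def
      by (simp add: algebra_simps scaleR_scaleR)
    have "(\<integral>y. ipcw_dr_term pol \<theta> pihat0 Ghat Shat c lam t y \<partial>?M)
       = (\<integral>x. (\<Sum>a\<in>UNIV. pmf (pi0 x) a *\<^sub>R (((w x a * (- Shat x a t)) *\<^sub>R s x a + Sig x)
            + (surv K x a t * cens_surv K t x a) *\<^sub>R ((w x a / G x a) *\<^sub>R s x a))) \<partial>px)"
      by (rule sample_integral[OF px pi0_meas K_meas K_prob cond_indep int_dr ff])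
    also have "\<dots> = lagr_grad px pol \<theta> K c lam t"
      unfolding lg
    proof (intro Bochner_Integration.integral_cong refl)
      fix x
      have split: "pmf (pi0 x) a *\<^sub>R (((w x a * (- Shat x a t)) *\<^sub>R s x a + Sig x)
            + (surv K x a t * cens_surv K t x a) *\<^sub>R ((w x a / G x a) *\<^sub>R s x a))
          = (pmf (pi0 x) a * (w x a * (- Shat x a t) + S x a * G x a * (w x a / G x a))) *\<^sub>R s x a
            + pmf (pi0 x) a *\<^sub>R Sig x" for a
        unfolding S_def G_def by (simp add: scaleR_scaleR algebra_simps)
      have "(\<Sum>a\<in>UNIV. pmf (pi0 x) a *\<^sub>R (((w x a * (- Shat x a t)) *\<^sub>R s x a + Sig x)
            + (surv K x a t * cens_surv K t x a) *\<^sub>R ((w x a / G x a) *\<^sub>R s x a)))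
          = (\<Sum>a\<in>UNIV. (pmf (pi0 x) a * (w x a * (- Shat x a t) + S x a * G x a * (w x a / G x a))) *\<^sub>R s x a)
            + Sig x"
        unfolding split sum.distrib scaleR_sum_left[symmetric] sum1 by simp
      also have "(\<Sum>a\<in>UNIV. (pmf (pi0 x) a * (w x a * (- Shat x a t) + S x a * G x a * (w x a / G x a))) *\<^sub>R s x a)
          = (\<Sum>a\<in>UNIV. pmf (pol \<theta> x) a *\<^sub>R ((S x a - Shat x a t) *\<^sub>R s x a))"
      proof (rule sum.cong[OF refl])
        fix a
        have "pmf (pi0 x) a * (w x a * (- Shat x a t) + S x a * G x a * (w x a / G x a))
            = pmf (pol \<theta> x) a * (S x a - Shat x a t)"
          using hyp
        proof
          assume eq: "pihat0 = pi0"
          show ?thesis unfolding w_def eq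
            by (rule coef1) (use common_support[of x a] pmf_nonneg[of "pol \<theta> x" a] Gpos[of x a] in auto)
        next
          assume "\<forall>x a. Shat x a t = surv K x a t"
          then have e: "Shat x a t = S x a" unfolding S_def by simp
          show ?thesis unfolding e w_def
            using coef2[of "pmf (pol \<theta> x) a" "G x a" "pmf (pihat0 x) a" "S x a"] Gpos[of x a] by simp
        qed
        then show "(pmf (pi0 x) a * (w x a * (- Shat x a t) + S x a * G x a * (w x a / G x a))) *\<^sub>R s x a
            = pmf (pol \<theta> x) a *\<^sub>R ((S x a - Shat x a t) *\<^sub>R s x a)"
          by (simp add: scaleR_scaleR)
      qed
      also have "(\<Sum>a\<in>UNIV. pmf (pol \<theta> x) a *\<^sub>R ((S x a - Shat x a t) *\<^sub>R s x a)) + Sig x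
          = (\<Sum>a\<in>UNIV. pmf (pol \<theta> x) a *\<^sub>R ((S x a - lam * c x a) *\<^sub>R s x a))"
        unfolding Sig_def s_def sum.distrib[symmetric]
        by (rule sum.cong[OF refl]) (simp add: algebra_simps)
      finally show "(\<Sum>a\<in>UNIV. pmf (pi0 x) a *\<^sub>R (((w x a * (- Shat x a t)) *\<^sub>R s x a + Sig x)
            + (surv K x a t * cens_surv K t x a) *\<^sub>R ((w x a / G x a) *\<^sub>R s x a)))
          = (\<Sum>a\<in>UNIV. pmf (pol \<theta> x) a *\<^sub>R ((S x a - lam * c x a) *\<^sub>R s x a))" .
    qed
    finally show "(\<integral>D. emp_avg n (ipcw_dr_term pol \<theta> pihat0 Ghat Shat c lam t) D \<partial>data_dist n px pi0 K)
              = lagr_grad px pol \<theta> K c lam t"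
      unfolding DD using data_integral[OF P int_dr n] by simp
  qed
qed

end
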